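(* The subalgebra of $U^+$ generated by $e_2,w,e_3$ and the subalgebra of $U^+$ generated by $e_1,\overline{e_3},\overline w$ are not isomorphic as $\Bbbk$-algebras.
   Context: $\Bbbk$ is an algebraically closed field of characteristic zero and $q\in\Bbbk^\times$ is not a root of unity. $U^+$ is the $\Bbbk$-algebra generated by $e_1,e_2$ with relations (S1) $e_1^2e_2-(q^2+q^{-2})e_1e_2e_1+e_2e_1^2=0$ and (S2) $e_2^3e_1-(q^2+1+q^{-2})e_2^2e_1e_2+(q^2+1+q^{-2})e_2e_1e_2^2-e_1e_2^3=0$. Set $e_3=e_1e_2-q^2e_2e_1$, $w=e_2e_3-e_3e_2$, $\overline{e_3}=e_1e_2-q^{-2}e_2e_1$, $\overline w=e_2\overline{e_3}-\overline{e_3}e_2$. *)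

theory Defs
  imports "HOL-Computational_Algebra.Polynomial"
begin

text \<open>Free associative algebra k<x_0, x_1> over a field: an element is a coefficient
function on words (lists of variable indices); elements of the algebra are the
finitely supported ones (nc_alg).\<close>

type_synonym 'k nca = "nat list \<Rightarrow> 'k"

definition nc_zero :: "'k::field nca" where "nc_zero = (\<lambda>w. 0)"
definition nc_one :: "'k::field nca" where "nc_one = (\<lambda>w. if w = [] then 1 else 0)"
definition nc_var :: "nat \<Rightarrow> 'k::field nca" where "nc_var i = (\<lambda>w. if w = [i] then 1 else 0)"
definition nc_add :: "'k::field nca \<Rightarrow> 'k nca \<Rightarrow> 'k nca" where "nc_add f g = (\<lambda>w. f w + g w)"
definition nc_diff :: "'k::field nca \<Rightarrow> 'k nca \<Rightarrow> 'k nca" where "nc_diff f g = (\<lambda>w. f w - g w)"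
definition nc_smult :: "'k::field \<Rightarrow> 'k nca \<Rightarrow> 'k nca" where "nc_smult c f = (\<lambda>w. c * f w)"
definition nc_mult :: "'k::field nca \<Rightarrow> 'k nca \<Rightarrow> 'k nca" where
  "nc_mult f g = (\<lambda>w. \<Sum>i\<le>length w. f (take i w) * g (drop i w))"
definition nc_alg :: "'k::field nca set" where "nc_alg = {f. finite {w. f w \<noteq> 0}}"

inductive_set nc_ideal :: "'k::field nca set \<Rightarrow> 'k nca set" for R where
  gen: "r \<in> R \<Longrightarrow> r \<in> nc_ideal R"
| zero: "nc_zero \<in> nc_ideal R"
| add: "a \<in> nc_ideal R \<Longrightarrow> b \<in> nc_ideal R \<Longrightarrow> nc_add a b \<in> nc_ideal R"
| smult: "a \<in> nc_ideal R \<Longrightarrow> nc_smult c a \<in> nc_ideal R"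
| lmult: "a \<in> nc_alg \<Longrightarrow> b \<in> nc_ideal R \<Longrightarrow> nc_mult a b \<in> nc_ideal R"
| rmult: "a \<in> nc_ideal R \<Longrightarrow> b \<in> nc_alg \<Longrightarrow> nc_mult a b \<in> nc_ideal R"

inductive_set nc_subalg :: "'k::field nca set \<Rightarrow> 'k nca set" for G where
  one: "nc_one \<in> nc_subalg G"
| gen: "g \<in> G \<Longrightarrow> g \<in> nc_subalg G"
| add: "a \<in> nc_subalg G \<Longrightarrow> b \<in> nc_subalg G \<Longrightarrow> nc_add a b \<in> nc_subalg G"
| smult: "a \<in> nc_subalg G \<Longrightarrow> nc_smult c a \<in> nc_subalg G"
| mult: "a \<in> nc_subalg G \<Longrightarrow> b \<in> nc_subalg G \<Longrightarrow> nc_mult a b \<in> nc_subalg G"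

text \<open>Congruence modulo the ideal generated by R (i.e. equality in the quotient algebra).\<close>
definition nc_cong :: "'k::field nca set \<Rightarrow> 'k nca \<Rightarrow> 'k nca \<Rightarrow> bool" where
  "nc_cong R x y \<longleftrightarrow> nc_diff x y \<in> nc_ideal R"

text \<open>For subsets S1, S2 of the free algebra, the images of S1 and S2 in the quotient
by the ideal generated by R are isomorphic as k-algebras: phi on representatives
induces a well-defined, injective, surjective, unital k-algebra homomorphism.\<close>
definition nc_quot_iso :: "'k::field nca set \<Rightarrow> 'k nca set \<Rightarrow> 'k nca set \<Rightarrow> bool" where
  "nc_quot_iso R S1 S2 \<longleftrightarrow> (\<exists>\<phi>.
     (\<forall>x\<in>S1. \<phi> x \<in> S2) \<and>
     (\<forall>x\<in>S1. \<forall>y\<in>S1. nc_cong R x y \<longleftrightarrow> nc_cong R (\<phi> x) (\<phi> y)) \<and>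
     (\<forall>z\<in>S2. \<exists>x\<in>S1. nc_cong R z (\<phi> x)) \<and>
     nc_cong R (\<phi> nc_one) nc_one \<and>
     (\<forall>x\<in>S1. \<forall>y\<in>S1. nc_cong R (\<phi> (nc_add x y)) (nc_add (\<phi> x) (\<phi> y))) \<and>
     (\<forall>x\<in>S1. \<forall>y\<in>S1. nc_cong R (\<phi> (nc_mult x y)) (nc_mult (\<phi> x) (\<phi> y))) \<and>
     (\<forall>c. \<forall>x\<in>S1. nc_cong R (\<phi> (nc_smult c x)) (nc_smult c (\<phi> x))))"

text \<open>U^+ = k<e1,e2>/(S1,S2), with e1 = x_0, e2 = x_1.\<close>
definition E1 :: "'k::field nca" where "E1 = nc_var 0"
definition E2 :: "'k::field nca" where "E2 = nc_var 1"

definition rel_S1 :: "'k::field \<Rightarrow> 'k nca" where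
  "rel_S1 q = nc_add
     (nc_diff (nc_mult E1 (nc_mult E1 E2))
              (nc_smult (q^2 + inverse (q^2)) (nc_mult E1 (nc_mult E2 E1))))
     (nc_mult E2 (nc_mult E1 E1))"

definition rel_S2 :: "'k::field \<Rightarrow> 'k nca" where
  "rel_S2 q = nc_diff
     (nc_add
       (nc_diff (nc_mult E2 (nc_mult E2 (nc_mult E2 E1)))
                (nc_smult (q^2 + 1 + inverse (q^2)) (nc_mult E2 (nc_mult E2 (nc_mult E1 E2)))))
       (nc_smult (q^2 + 1 + inverse (q^2)) (nc_mult E2 (nc_mult E1 (nc_mult E2 E2)))))
     (nc_mult E1 (nc_mult E2 (nc_mult E2 E2)))"

definition Uplus_rels :: "'k::field \<Rightarrow> 'k nca set" where
  "Uplus_rels q = {rel_S1 q, rel_S2 q}"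

definition E3 :: "'k::field \<Rightarrow> 'k nca" where
  "E3 q = nc_diff (nc_mult E1 E2) (nc_smult (q^2) (nc_mult E2 E1))"
definition W :: "'k::field \<Rightarrow> 'k nca" where
  "W q = nc_diff (nc_mult E2 (E3 q)) (nc_mult (E3 q) E2)"
definition E3bar :: "'k::field \<Rightarrow> 'k nca" where
  "E3bar q = nc_diff (nc_mult E1 E2) (nc_smult (inverse (q^2)) (nc_mult E2 E1))"
definition Wbar :: "'k::field \<Rightarrow> 'k nca" where
  "Wbar q = nc_diff (nc_mult E2 (E3bar q)) (nc_mult (E3bar q) E2)"

end

theory Submission
  imports Defs
begin

lemma mult_nil: "nc_mult f g [] = f [] * g []"
  by (simp add: nc_mult_def)
lemma mult_1: "nc_mult f g [a] = f [] * g [a] + f [a] * g []"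
  by (simp add: nc_mult_def)
lemma mult_2: "nc_mult f g [a,b] = f [] * g [a,b] + f [a] * g [b] + f [a,b] * g []"
  by (simp add: nc_mult_def atMost_Suc numeral_2_eq_2 algebra_simps)
lemma mult_3: "nc_mult f g [a,b,c] = f [] * g [a,b,c] + f [a] * g [b,c] + f [a,b] * g [c] + f [a,b,c] * g []"
  by (simp add: nc_mult_def atMost_Suc numeral_3_eq_3 algebra_simps)

definition lowv :: "nat \<Rightarrow> 'k::field nca \<Rightarrow> bool" where
  "lowv n f \<longleftrightarrow> (\<forall>w. length w < n \<longrightarrow> f w = 0)"

lemma lowv_mult: assumes "lowv m f" "lowv n g" shows "lowv (m+n) (nc_mult f g)"
  unfolding lowv_def nc_mult_def
proof (intro allI impI)
  fix w :: "nat list" assume l: "length w < m + n"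
  have "\<And>i. i \<le> length w \<Longrightarrow> f (take i w) * g (drop i w) = 0"
  proof -
    fix i assume il: "i \<le> length w"
    show "f (take i w) * g (drop i w) = 0"
    proof (cases "i < m")
      case True then show ?thesis using assms(1) unfolding lowv_def by simp
    next
      case False then have "length (drop i w) < n" using l il by simp
      then show ?thesis using assms(2) unfolding lowv_def by simp
    qed
  qed
  note h = this
  show "(\<Sum>i\<le>length w. f (take i w) * g (drop i w)) = 0"
    apply (rule sum.neutral) using h by blast
qed

lemma lowv_var: "lowv 1 (nc_var a)" unfolding lowv_def nc_var_def by auto
lemma lowv_add: "lowv n f \<Longrightarrow> lowv n g \<Longrightarrow> lowv n (nc_add f g)" by (simp add: lowv_def nc_add_def)
lemma lowv_diff: "lowv n f \<Longrightarrow> lowv n g \<Longrightarrow> lowv n (nc_diff f g)" by (simp add: lowv_def nc_diff_def)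
lemma lowv_smult: "lowv n f \<Longrightarrow> lowv n (nc_smult c f)" by (simp add: lowv_def nc_smult_def)

lemma lowv_E1: "lowv (Suc 0) E1" unfolding E1_def using lowv_var by simp
lemma lowv_E2: "lowv (Suc 0) E2" unfolding E2_def using lowv_var by simp

lemma lowv_multL: "lowv (Suc 0) f \<Longrightarrow> lowv n g \<Longrightarrow> lowv (Suc n) (nc_mult f g)"
  using lowv_mult[of "Suc 0" f n g] by simp
lemma lowv_multR: "lowv n f \<Longrightarrow> lowv (Suc 0) g \<Longrightarrow> lowv (Suc n) (nc_mult f g)"
  using lowv_mult[of n f "Suc 0" g] by simp

lemmas lowv_rules = lowv_multL lowv_add lowv_diff lowv_smult lowv_E1 lowv_E2

lemma lowv_S1: "lowv (Suc (Suc (Suc 0))) (rel_S1 q)"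
  unfolding rel_S1_def by (intro lowv_rules) 
lemma lowv_S2: "lowv (Suc (Suc (Suc (Suc 0)))) (rel_S2 q)"
  unfolding rel_S2_def by (intro lowv_rules)
lemma lowv_E3bar: "lowv (Suc (Suc 0)) (E3bar q)"
  unfolding E3bar_def by (intro lowv_rules)
lemma lowv_Wbar: "lowv (Suc (Suc (Suc 0))) (Wbar q)"
  unfolding Wbar_def by (intro lowv_rules lowv_multR lowv_E3bar)

lemma E_vals: "E1 [] = 0" "E1 [0] = 1" "E1 [Suc 0] = 0" "E2 [] = 0" "E2 [0] = 0" "E2 [Suc 0] = 1"
  "E1 [a,b] = 0" "E2 [a,b] = 0" "E1 [a,b,c] = 0" "E2 [a,b,c] = 0"
  by (simp_all add: E1_def E2_def nc_var_def)

lemma S1_011: "rel_S1 q [0,Suc 0,Suc 0] = 0"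
  by (simp add: rel_S1_def nc_add_def nc_diff_def nc_smult_def mult_1 mult_2 mult_3 mult_nil E_vals)

lemma E3bar_vals: "E3bar q [Suc 0] = 0" "E3bar q [Suc 0,Suc 0] = 0" "E3bar q [0,Suc 0] = 1" "E3bar q [0,Suc 0,Suc 0] = 0" "E3bar q [0] = 0" "E3bar q [] = 0"
  by (simp_all add: E3bar_def nc_diff_def nc_smult_def mult_1 mult_2 mult_3 mult_nil E_vals)

lemma Wbar_vals: "Wbar q [Suc 0] = 0" "Wbar q [Suc 0,Suc 0] = 0" "Wbar q [0,Suc 0,Suc 0] = -1" "Wbar q [0] = 0" "Wbar q [0,Suc 0] = 0" "Wbar q [] = 0"
  using lowv_Wbar[of q] unfolding lowv_def apply simp_all
  by (simp add: Wbar_def nc_diff_def mult_3 E_vals E3bar_vals)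


lemma lowv_mono: "lowv n f \<Longrightarrow> m \<le> n \<Longrightarrow> lowv m f" by (simp add: lowv_def)

lemma ideal_low:
  assumes "x \<in> nc_ideal (Uplus_rels q)"
  shows "lowv (Suc (Suc (Suc 0))) x \<and> x [0,Suc 0,Suc 0] = 0"
  using assms
proof (induction rule: nc_ideal.induct)
  case (gen r)
  then show ?case
  proof (simp add: Uplus_rels_def, elim disjE)
    assume r: "r = rel_S1 q" show ?thesis unfolding r using lowv_S1[of q] S1_011[of q] by blast
  next
    assume r: "r = rel_S2 q"
    have "lowv (Suc (Suc (Suc (Suc 0)))) r" using r lowv_S2 by simp
    then show ?thesis using lowv_mono[of _ r] unfolding lowv_def by simp
  qed
next
  case zero then show ?case by (simp add: lowv_def nc_zero_def)
next
  case (add a b) then show ?case by (simp add: lowv_def nc_add_def)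
next
  case (smult a c) then show ?case by (simp add: lowv_def nc_smult_def)
next
  case (lmult a b)
  have "lowv (0 + Suc (Suc (Suc 0))) (nc_mult a b)"
    by (rule lowv_mult) (use lmult in \<open>auto simp: lowv_def\<close>)
  moreover have "nc_mult a b [0,Suc 0,Suc 0] = 0"
    using lmult unfolding mult_3 lowv_def by simp
  ultimately show ?case by simp
next
  case (rmult a b)
  have "lowv (Suc (Suc (Suc 0)) + 0) (nc_mult a b)"
    by (rule lowv_mult) (use rmult in \<open>auto simp: lowv_def\<close>)
  moreover have "nc_mult a b [0,Suc 0,Suc 0] = 0"
    using rmult unfolding mult_3 lowv_def by simp
  ultimately show ?case by simp
qed

lemma SB_vals:
  assumes "x \<in> nc_subalg {E1, E3bar q, Wbar q}"
  shows "x [Suc 0] = 0 \<and> x [Suc 0, Suc 0] = 0"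
  using assms
proof (induction rule: nc_subalg.induct)
  case one then show ?case by (simp add: nc_one_def)
next
  case (gen g) then show ?case using E3bar_vals Wbar_vals E_vals by auto
next
  case (add a b) then show ?case by (simp add: nc_add_def)
next
  case (smult a c) then show ?case by (simp add: nc_smult_def)
next
  case (mult a b) then show ?case by (simp add: mult_1 mult_2)
qed

definition Dd :: "'k::field \<Rightarrow> 'k \<Rightarrow> 'k \<Rightarrow> 'k nca \<Rightarrow> 'k" where
  "Dd a b c f = a * f [0] + b * f [0, Suc 0] + c * f [0, Suc 0, Suc 0]"

lemma Dd_add: "Dd a b c (nc_add f g) = Dd a b c f + Dd a b c g"
  by (simp add: Dd_def nc_add_def algebra_simps)
lemma Dd_diff: "Dd a b c (nc_diff f g) = Dd a b c f - Dd a b c g"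
  by (simp add: Dd_def nc_diff_def algebra_simps)
lemma Dd_smult: "Dd a b c (nc_smult t f) = t * Dd a b c f"
  by (simp add: Dd_def nc_smult_def algebra_simps)
lemma Dd_one: "Dd a b c nc_one = 0"
  by (simp add: Dd_def nc_one_def)
lemma Dd_mult: "g [Suc 0] = 0 \<Longrightarrow> g [Suc 0, Suc 0] = 0 \<Longrightarrow>
   Dd a b c (nc_mult f g) = f [] * Dd a b c g + Dd a b c f * g []"
  by (simp add: Dd_def mult_1 mult_2 mult_3 algebra_simps)

lemma Dd_ideal: "x \<in> nc_ideal (Uplus_rels q) \<Longrightarrow> Dd a b c x = 0 \<and> x [] = 0"
  using ideal_low[of x q] unfolding Dd_def lowv_def by simp

lemma cong_Dd: "nc_cong (Uplus_rels q) x y \<Longrightarrow> Dd a b c x = Dd a b c y \<and> x [] = y []"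
  unfolding nc_cong_def using Dd_ideal[of "nc_diff x y" q a b c]
  by (simp add: Dd_def nc_diff_def algebra_simps)

lemma lin_alg:
  fixes a1 b1 c1 a2 b2 c2 :: "'k::field"
  shows "\<exists>a b c. (a \<noteq> 0 \<or> b \<noteq> 0 \<or> c \<noteq> 0) \<and> a1*a + b1*b + c1*c = 0 \<and> a2*a + b2*b + c2*c = 0"
proof (cases "b1*c2 - c1*b2 \<noteq> 0 \<or> c1*a2 - a1*c2 \<noteq> 0 \<or> a1*b2 - b1*a2 \<noteq> 0")
  case True
  then show ?thesis
    by (intro exI[of _ "b1*c2 - c1*b2"] exI[of _ "c1*a2 - a1*c2"] exI[of _ "a1*b2 - b1*a2"])
       (simp add: algebra_simps)
next
  case False
  then have e1: "b1*c2 = c1*b2" "c1*a2 = a1*c2" "a1*b2 = b1*a2" by auto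
  show ?thesis
  proof (cases "a1 = 0 \<and> b1 = 0 \<and> c1 = 0")
    case z: True
    show ?thesis
    proof (cases "a2 = 0 \<and> b2 = 0")
      case True then show ?thesis using z
        by (intro exI[of _ 0] exI[of _ 0] exI[of _ 1]) simp
    next
      case False then show ?thesis using z
        by (intro exI[of _ b2] exI[of _ "-a2"] exI[of _ 0]) (auto simp: algebra_simps)
    qed
  next
    case nz: False
    show ?thesis
    proof (cases "a1 = 0 \<and> b1 = 0")
      case True
      then have "c1 \<noteq> 0" using nz by auto
      then have "a2 = 0" using e1 True by auto
      then show ?thesis using True
        by (intro exI[of _ 1] exI[of _ 0] exI[of _ 0]) simp
    next
      case False then show ?thesis using e1
        by (intro exI[of _ b1] exI[of _ "-a1"] exI[of _ 0]) (auto simp: algebra_simps)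
    qed
  qed
qed


lemma W_expand: "W q = nc_add (nc_mult E2 (E3 q)) (nc_smult (-1) (nc_mult (E3 q) E2))"
  by (simp add: W_def nc_add_def nc_diff_def nc_smult_def fun_eq_iff)

theorem mainTheorem18:
  fixes q :: "'k::field_char_0"
  assumes alg_closed: "\<forall>p :: 'k poly. degree p > 0 \<longrightarrow> (\<exists>x. poly p x = 0)"
    and q_nz: "q \<noteq> 0"
    and q_not_root_of_unity: "\<forall>n::nat. n > 0 \<longrightarrow> q ^ n \<noteq> 1"
  shows "\<not> nc_quot_iso (Uplus_rels q)
            (nc_subalg {E2, W q, E3 q})
            (nc_subalg {E1, E3bar q, Wbar q})"
proof
  let ?R = "Uplus_rels q"
  let ?A = "nc_subalg {E2, W q, E3 q}"
  let ?B = "nc_subalg {E1, E3bar q, Wbar q}"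
  assume "nc_quot_iso ?R ?A ?B"
  then obtain \<phi> where
    hB: "\<forall>x\<in>?A. \<phi> x \<in> ?B" and
    hS: "\<forall>z\<in>?B. \<exists>x\<in>?A. nc_cong ?R z (\<phi> x)" and
    h1: "nc_cong ?R (\<phi> nc_one) nc_one" and
    hadd: "\<forall>x\<in>?A. \<forall>y\<in>?A. nc_cong ?R (\<phi> (nc_add x y)) (nc_add (\<phi> x) (\<phi> y))" and
    hmul: "\<forall>x\<in>?A. \<forall>y\<in>?A. nc_cong ?R (\<phi> (nc_mult x y)) (nc_mult (\<phi> x) (\<phi> y))" and
    hsm: "\<forall>c. \<forall>x\<in>?A. nc_cong ?R (\<phi> (nc_smult c x)) (nc_smult c (\<phi> x))"
    unfolding nc_quot_iso_def by blast
  have key: "a = 0 \<and> b = 0 \<and> c = 0"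
    if z2: "Dd a b c (\<phi> E2) = 0" and z3: "Dd a b c (\<phi> (E3 q)) = 0" for a b c
  proof -
    have sadd: "Dd a b c (\<phi> (nc_add x y)) = Dd a b c (\<phi> x) + Dd a b c (\<phi> y)"
      if "x \<in> ?A" "y \<in> ?A" for x y
    proof -
      have "nc_cong ?R (\<phi> (nc_add x y)) (nc_add (\<phi> x) (\<phi> y))" using hadd that by blast
      from cong_Dd[OF this, of a b c] show ?thesis by (simp add: Dd_add)
    qed
    have ssm: "Dd a b c (\<phi> (nc_smult t x)) = t * Dd a b c (\<phi> x)"
      if "x \<in> ?A" for x t
    proof -
      have "nc_cong ?R (\<phi> (nc_smult t x)) (nc_smult t (\<phi> x))" using hsm that by blast
      from cong_Dd[OF this, of a b c] show ?thesis by (simp add: Dd_smult)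
    qed
    have smul: "Dd a b c (\<phi> (nc_mult x y)) = (\<phi> x) [] * Dd a b c (\<phi> y) + Dd a b c (\<phi> x) * (\<phi> y) []"
      if "x \<in> ?A" "y \<in> ?A" for x y
    proof -
      have "\<phi> y \<in> ?B" using hB that by blast
      then have "(\<phi> y) [Suc 0] = 0" "(\<phi> y) [Suc 0, Suc 0] = 0" using SB_vals by blast+
      moreover have "nc_cong ?R (\<phi> (nc_mult x y)) (nc_mult (\<phi> x) (\<phi> y))" using hmul that by blast
      from cong_Dd[OF this, of a b c] have "Dd a b c (\<phi> (nc_mult x y)) = Dd a b c (nc_mult (\<phi> x) (\<phi> y))" by blast
      ultimately show ?thesis using Dd_mult by simp
    qed
    have s1: "Dd a b c (\<phi> nc_one) = 0" using cong_Dd[OF h1, of a b c] Dd_one by simp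
    have gA: "E2 \<in> ?A" "E3 q \<in> ?A" by (auto intro: nc_subalg.gen)
    have zero: "Dd a b c (\<phi> x) = 0" if "x \<in> ?A" for x
      using that
    proof (induction rule: nc_subalg.induct)
      case one then show ?case using s1 .
    next
      case (gen g)
      then consider "g = E2" | "g = W q" | "g = E3 q" by blast
      then show ?case
      proof cases
        case 1 then show ?thesis using z2 by simp
      next
        case 2
        have m1: "nc_mult E2 (E3 q) \<in> ?A" "nc_mult (E3 q) E2 \<in> ?A"
          using gA by (auto intro: nc_subalg.mult)
        have "Dd a b c (\<phi> (W q)) = Dd a b c (\<phi> (nc_mult E2 (E3 q))) + (-1) * Dd a b c (\<phi> (nc_mult (E3 q) E2))"
        proof -
          have m2: "nc_smult (-1) (nc_mult (E3 q) E2) \<in> ?A" using m1(2) by (rule nc_subalg.smult)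
          show ?thesis unfolding W_expand sadd[OF m1(1) m2] ssm[OF m1(2)] ..
        qed
        also have "\<dots> = 0" using smul gA z2 z3 by simp
        finally show ?thesis using 2 by simp
      next
        case 3 then show ?thesis using z3 by simp
      qed
    next
      case (add x y) then show ?case using sadd by simp
    next
      case (smult x t) then show ?case using ssm by simp
    next
      case (mult x y) then show ?case using smul by simp
    qed
    have zB: "Dd a b c z = 0" if "z \<in> {E1, E3bar q, Wbar q}" for z
    proof -
      have "z \<in> ?B" using that by (auto intro: nc_subalg.gen)
      then obtain x where "x \<in> ?A" "nc_cong ?R z (\<phi> x)" using hS by blast
      then show ?thesis using zero cong_Dd[of q z "\<phi> x" a b c] by simp
    qed
    have "Dd a b c E1 = a" by (simp add: Dd_def E_vals)
    moreover have "Dd a b c (E3bar q) = b" by (simp add: Dd_def E3bar_vals)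
    moreover have "Dd a b c (Wbar q) = - c" by (simp add: Dd_def Wbar_vals)
    ultimately show ?thesis using zB by auto
  qed
  obtain a b c where abc: "a \<noteq> 0 \<or> b \<noteq> 0 \<or> c \<noteq> 0"
    "(\<phi> E2) [0] * a + (\<phi> E2) [0, Suc 0] * b + (\<phi> E2) [0, Suc 0, Suc 0] * c = 0"
    "(\<phi> (E3 q)) [0] * a + (\<phi> (E3 q)) [0, Suc 0] * b + (\<phi> (E3 q)) [0, Suc 0, Suc 0] * c = 0"
    using lin_alg by blast
  have "Dd a b c (\<phi> E2) = 0" "Dd a b c (\<phi> (E3 q)) = 0"
    using abc(2,3) by (simp_all add: Dd_def algebra_simps)
  then show False using key abc(1) by blast
qed

end
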